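(* Let $n \ge 1$, let $N=\{1,\dots,n\}$ be a set of agents, $A=[0,1]$, and let $f$ be an ordered weighted average (OWA) mechanism with weights $w_1,\dots,w_n \in [0,1]$, $\sum_{j=1}^n w_j = 1$. Then $f$ is not obviously manipulable (NOM) if and only if either (i) $w_j = 1$ for some $j \in \{1,\dots,n\}$, or (ii) $w_1 = w_n = 0$.
   Context: A mechanism is a map $f: A^n \to A$ taking a profile $x=(x_i)_{i\in N}$ of reported locations (peaks) and returning a facility location. For $x_i$ the true location of agent $i$ and $y\in A$ the facility location, agent $i$'s utility is $u(x_i,y) = 1-|x_i-y|$. Write $f(x_i', x_{-i})$ for the output when agent $i$ reports $x_i'$ and the others report $x_{-i}\in A^{n-1}$. An OWA mechanism with weights $w_1,\dots,w_n$ returns $f(x)=\sum_{j=1}^n w_j x_{\pi(j)}$, where $\pi$ is a permutation of $N$ with $x_{\pi(1)}\le x_{\pi(2)}\le\dots\le x_{\pi(n)}$ (the $j$-th weight is applied to the $j$-th smallest report). $f$ satisfies NOM if for every $i\in N$ and all $x_i, x_i' \in A$: $\max_{x_{-i}\in A^{n-1}} u(x_i, f(x_i,x_{-i})) \ge \max_{x_{-i}\in A^{n-1}} u(x_i, f(x_i',x_{-i}))$ and $\min_{x_{-i}\in A^{n-1}} u(x_i, f(x_i,x_{-i})) \ge \min_{x_{-i}\in A^{n-1}} u(x_i, f(x_i',x_{-i}))$. *)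

theory Defs
  imports Complex_Main
begin

text \<open>Agents are N = {1..n}; a profile is a function nat \<Rightarrow> real, only its values on N matter.
  The location space is A = {0..1}.\<close>

definition util :: "real \<Rightarrow> real \<Rightarrow> real" where
  "util xi y = 1 - \<bar>xi - y\<bar>"

definition owa :: "nat \<Rightarrow> (nat \<Rightarrow> real) \<Rightarrow> (nat \<Rightarrow> real) \<Rightarrow> real" where
  "owa n w x = (\<Sum>j<n. w (j + 1) * (sort (map x [1..<n+1])) ! j)"

text \<open>Reports of the agents other than i, each in A (component i is irrelevant, it is overwritten).\<close>
definition others :: "nat \<Rightarrow> nat \<Rightarrow> (nat \<Rightarrow> real) set" where
  "others n i = {y. \<forall>j\<in>{1..n} - {i}. y j \<in> {0..1}}"

text \<open>Not obviously manipulable. The max/min over x_{-i} in the paper are attained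
  for continuous mechanisms; we use Sup/Inf of the image set.\<close>
definition NOM :: "nat \<Rightarrow> ((nat \<Rightarrow> real) \<Rightarrow> real) \<Rightarrow> bool" where
  "NOM n f \<longleftrightarrow> (\<forall>i\<in>{1..n}. \<forall>xi\<in>{0..1}. \<forall>xi'\<in>{0..1}.
     (SUP y\<in>others n i. util xi (f (y(i := xi)))) \<ge> (SUP y\<in>others n i. util xi (f (y(i := xi')))) \<and>
     (INF y\<in>others n i. util xi (f (y(i := xi)))) \<ge> (INF y\<in>others n i. util xi (f (y(i := xi')))))"

end

theory Submission
  imports Defs "HOL-Library.Multiset"
begin

lemma sum_shift1: fixes n :: nat shows "(\<Sum>j=1..n. w j) = (\<Sum>j<n. w (j+1) :: real)"
  by (induct n) auto

lemma owa_bounds: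
  assumes n1: "n \<ge> 1" and wr: "\<forall>j\<in>{1..n}. w j \<in> {0..1}"
    and ws: "(\<Sum>j=1..n. w j) = 1"
    and i: "i \<in> {1..n}" and d: "d \<in> {0..1}" and y: "y \<in> others n i"
  shows "w n * d \<le> owa n w (y(i:=d))" "owa n w (y(i:=d)) \<le> w 1 * d + (1 - w 1)"
proof -
  define x where "x = y(i:=d)"
  define s where "s = sort (map x [1..<n+1])"
  have len: "length s = n" unfolding s_def by simp
  have srt: "sorted s" unfolding s_def by simp
  have sets: "set s = x ` {1..<n+1}" unfolding s_def by (simp only: set_sort set_map set_upt)
  have rng: "s!j \<in> {0..1}" if "j < n" for j
  proof -
    have "s!j \<in> set s" using that len by simp
    then obtain k where k: "k \<in> {1..<n+1}" "s!j = x k" using sets by auto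
    show ?thesis
    proof (cases "k = i")
      case True then show ?thesis using k d unfolding x_def by simp
    next
      case False then show ?thesis using k y unfolding x_def others_def by auto
    qed
  qed
  have "d \<in> set s" using sets i unfolding x_def by force
  then obtain k where k: "k < n" "s!k = d" using len by (auto simp: in_set_conv_nth)
  have s0: "s!0 \<le> d" using sorted_nth_mono[OF srt, of 0 k] k len by simp
  have sn: "d \<le> s!(n-1)" using sorted_nth_mono[OF srt, of k "n-1"] k len by simp
  have wsum: "(\<Sum>j<n. w (j+1)) = 1" using ws sum_shift1 by metis
  have wnn: "\<And>j. j < n \<Longrightarrow> 0 \<le> w (j+1)" using wr by auto
  have owa_eq: "owa n w x = (\<Sum>j<n. w (j + 1) * s ! j)" unfolding owa_def s_def by simp
  have "w n * s!(n-1) \<le> (\<Sum>j<n. w (j + 1) * s ! j)"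
  proof -
    have "w (n-1+1) * s!(n-1) \<le> (\<Sum>j<n. w (j + 1) * s ! j)"
      by (rule member_le_sum[where f="\<lambda>j. w (j + 1) * s ! j"]) (use n1 wnn rng in auto)
    then show ?thesis using n1 by simp
  qed
  moreover have "w n * d \<le> w n * s!(n-1)" using sn wr n1 by (intro mult_left_mono) auto
  ultimately show "w n * d \<le> owa n w (y(i:=d))" using owa_eq x_def by simp
  obtain m where m: "n = Suc m" using n1 by (cases n) auto
  have e1: "(\<Sum>j<n. w (j + 1) * s ! j) = w 1 * s!0 + (\<Sum>j<m. w (j + 2) * s ! Suc j)"
    unfolding m by (subst sum.lessThan_Suc_shift) simp
  have e2: "(\<Sum>j<n. w (j + 1)) = w 1 + (\<Sum>j<m. w (j + 2))"
    unfolding m by (subst sum.lessThan_Suc_shift) simp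
  have "(\<Sum>j<m. w (j + 2) * s ! Suc j) \<le> (\<Sum>j<m. w (j + 2))"
  proof (rule sum_mono)
    fix j assume "j \<in> {..<m}"
    then have "0 \<le> w (j+2)" "s ! Suc j \<le> 1" using wnn[of "Suc j"] rng[of "Suc j"] m by auto
    then show "w (j + 2) * s ! Suc j \<le> w (j + 2)" by (simp add: mult_left_le)
  qed
  moreover have "w 1 * s!0 \<le> w 1 * d" using s0 wr n1 by (intro mult_left_mono) auto
  ultimately show "owa n w (y(i:=d)) \<le> w 1 * d + (1 - w 1)"
    using owa_eq x_def e1 e2 wsum by simp
qed

lemma map_special:
  fixes c d :: real
  assumes i: "i \<in> {1..n}"
  shows "map ((\<lambda>_. c)(i:=d)) [1..<n+1] = replicate (i-1) c @ [d] @ replicate (n-i) c"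
proof -
  have "[1..<n+1] = [1..<i] @ [i] @ [i+1..<n+1]"
  proof -
    have "[1..<n+1] = [1..<i] @ [i..<n+1]" using i upt_add_eq_append[of 1 i "n+1-i"] by simp
    also have "[i..<n+1] = i # [i+1..<n+1]" using i by (simp add: upt_conv_Cons)
    finally show ?thesis by simp
  qed
  moreover have "map ((\<lambda>_. c)(i:=d)) [1..<i] = replicate (i-1) c"
  proof -
    have "map ((\<lambda>_. c)(i:=d)) [1..<i] = map (\<lambda>_. c) [1..<i]" by (rule map_cong) auto
    then show ?thesis by (simp add: map_replicate_const)
  qed
  moreover have "map ((\<lambda>_. c)(i:=d)) [i+1..<n+1] = replicate (n-i) c"
  proof -
    have "map ((\<lambda>_. c)(i:=d)) [i+1..<n+1] = map (\<lambda>_. c) [i+1..<n+1]" by (rule map_cong) auto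
    then show ?thesis by (simp add: map_replicate_const) arith
  qed
  ultimately show ?thesis by simp
qed

lemma owa_special:
  assumes n1: "n \<ge> 1" and ws: "(\<Sum>j=1..n. w j) = 1" and i: "i \<in> {1..n}"
  shows "owa n w ((\<lambda>_. c)(i:=d)) =
    (if d \<le> c then w 1 * d + (1 - w 1) * c else (1 - w n) * c + w n * d)"
proof -
  obtain m where m: "n = Suc m" using n1 by (cases n) auto
  have wsum: "(\<Sum>j<n. w (j+1)) = 1" using ws sum_shift1 by metis
  have ms: "mset (map ((\<lambda>_. c)(i:=d)) [1..<n+1]) = add_mset d (replicate_mset m c)"
    unfolding map_special[OF i] using i m
    by (auto simp: multiset_eq_iff)
  show ?thesis
  proof (cases "d \<le> c")
    case True
    have "sort (map ((\<lambda>_. c)(i:=d)) [1..<n+1]) = d # replicate m c"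
      by (rule properties_for_sort) (use ms True in auto)
    then have "owa n w ((\<lambda>_. c)(i:=d)) = (\<Sum>j<Suc m. w (j + 1) * (d # replicate m c) ! j)"
      unfolding owa_def m by simp
    also have "\<dots> = w 1 * d + (\<Sum>j<m. w (j + 2)) * c"
      by (subst sum.lessThan_Suc_shift) (simp add: sum_distrib_right)
    also have "(\<Sum>j<m. w (j + 2)) = 1 - w 1"
      using wsum unfolding m by (subst (asm) sum.lessThan_Suc_shift) simp
    finally show ?thesis unfolding if_P[OF True] .
  next
    case False
    have "sort (map ((\<lambda>_. c)(i:=d)) [1..<n+1]) = replicate m c @ [d]"
      by (rule properties_for_sort) (use ms False in \<open>auto simp: sorted_append\<close>)
    then have "owa n w ((\<lambda>_. c)(i:=d)) = (\<Sum>j<Suc m. w (j + 1) * (replicate m c @ [d]) ! j)"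
      unfolding owa_def m by simp
    also have "\<dots> = (\<Sum>j<m. w (j + 1)) * c + w n * d"
      by (simp add: sum_distrib_right nth_append m)
    also have "(\<Sum>j<m. w (j + 1)) = 1 - w n"
      using wsum unfolding m by simp
    finally show ?thesis unfolding if_not_P[OF False] .
  qed
qed

locale owa_ctx =
  fixes n :: nat and w :: "nat \<Rightarrow> real"
  assumes n1: "n \<ge> 1"
    and wr: "\<forall>j\<in>{1..n}. w j \<in> {0..1}"
    and ws: "(\<Sum>j=1..n. w j) = 1"
begin

lemma util_range:
  assumes i: "i \<in> {1..n}" and x: "x \<in> {0..1}" and d: "d \<in> {0..1}" and y: "y \<in> others n i"
  shows "1 - max \<bar>x - w n * d\<bar> \<bar>x - (w 1 * d + (1 - w 1))\<bar> \<le> util x (owa n w (y(i:=d)))"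
    "util x (owa n w (y(i:=d))) \<le> 1"
proof -
  have a: "w n * d \<le> owa n w (y(i:=d))" "owa n w (y(i:=d)) \<le> w 1 * d + (1 - w 1)"
    using owa_bounds[OF n1 wr ws i d y] by auto
  show "1 - max \<bar>x - w n * d\<bar> \<bar>x - (w 1 * d + (1 - w 1))\<bar> \<le> util x (owa n w (y(i:=d)))"
    using a unfolding util_def by (auto simp: max_def abs_if)
  show "util x (owa n w (y(i:=d))) \<le> 1" unfolding util_def by simp
qed

lemma const_others: "c \<in> {0..1} \<Longrightarrow> (\<lambda>_. c) \<in> others n i"
  unfolding others_def by auto

lemma inf_lb:
  assumes i: "i \<in> {1..n}" and x: "x \<in> {0..1}" and d: "d \<in> {0..1}"
  shows "1 - max \<bar>x - w n * d\<bar> \<bar>x - (w 1 * d + (1 - w 1))\<bar>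
     \<le> (INF y\<in>others n i. util x (owa n w (y(i:=d))))"
  by (rule cINF_greatest) (use const_others[of 0 i] util_range[OF i x d] in auto)

lemma inf_ub:
  assumes i: "i \<in> {1..n}" and x: "x \<in> {0..1}" and d: "d \<in> {0..1}" and y: "y \<in> others n i"
  shows "(INF y\<in>others n i. util x (owa n w (y(i:=d)))) \<le> util x (owa n w (y(i:=d)))"
  by (rule cINF_lower) (use util_range[OF i x d] y in \<open>auto intro!: bdd_belowI2\<close>)

lemma sup_ub:
  assumes i: "i \<in> {1..n}" and x: "x \<in> {0..1}" and d: "d \<in> {0..1}"
  shows "(SUP y\<in>others n i. util x (owa n w (y(i:=d)))) \<le> 1"
  by (rule cSUP_least) (use const_others[of 0 i] util_range[OF i x d] in auto)

lemma sup_lb: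
  assumes i: "i \<in> {1..n}" and x: "x \<in> {0..1}" and d: "d \<in> {0..1}" and y: "y \<in> others n i"
  shows "util x (owa n w (y(i:=d))) \<le> (SUP y\<in>others n i. util x (owa n w (y(i:=d))))"
  by (rule cSUP_upper) (use util_range[OF i x d] y in \<open>auto intro!: bdd_aboveI2\<close>)

lemma special: "i \<in> {1..n} \<Longrightarrow> owa n w ((\<lambda>_. c)(i:=d)) =
    (if d \<le> c then w 1 * d + (1 - w 1) * c else (1 - w n) * c + w n * d)"
  using owa_special[OF n1 ws] by blast


lemma suff:
  assumes c: "(w 1 = 0 \<or> w 1 = 1) \<and> (w n = 0 \<or> w n = 1)"
  shows "NOM n (owa n w)"
  unfolding NOM_def
proof (intro ballI conjI)
  fix i x x' assume i: "i \<in> {1..n}" and x: "x \<in> {(0::real)..1}" and x': "x' \<in> {(0::real)..1}"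
  have "util x (owa n w ((\<lambda>_. x)(i:=x))) = 1"
    using special[OF i, of x x] unfolding util_def by (simp add: algebra_simps)
  then have "1 \<le> (SUP y\<in>others n i. util x (owa n w (y(i:=x))))"
    using sup_lb[OF i x x const_others[OF x]] by simp
  then show "(SUP y\<in>others n i. util x (owa n w (y(i:=x')))) \<le> (SUP y\<in>others n i. util x (owa n w (y(i:=x))))"
    using sup_ub[OF i x x'] by linarith
  have L: "1 - max \<bar>x - w n * x\<bar> \<bar>x - (w 1 * x + (1 - w 1))\<bar>
     \<le> (INF y\<in>others n i. util x (owa n w (y(i:=x))))" by (rule inf_lb[OF i x x])
  have M1: "(INF y\<in>others n i. util x (owa n w (y(i:=x')))) \<le> 1 - \<bar>x - w n * x'\<bar>"
    using inf_ub[OF i x x' const_others[of 0 i]] special[OF i, of 0 x'] x'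
    unfolding util_def by (auto split: if_splits)
  have M2: "(INF y\<in>others n i. util x (owa n w (y(i:=x')))) \<le> 1 - \<bar>x - (w 1 * x' + (1 - w 1))\<bar>"
    using inf_ub[OF i x x' const_others[of 1 i]] special[OF i, of 1 x'] x'
    unfolding util_def by (auto split: if_splits)
  have key: "max \<bar>x - w n * x\<bar> \<bar>x - (w 1 * x + (1 - w 1))\<bar> \<le> max \<bar>x - w n * x'\<bar> \<bar>x - (w 1 * x' + (1 - w 1))\<bar>"
    using c x x' by (auto simp: max_def abs_if)
  show "(INF y\<in>others n i. util x (owa n w (y(i:=x')))) \<le> (INF y\<in>others n i. util x (owa n w (y(i:=x))))"
    using L M1 M2 key by linarith
qed

lemma nec1:
  assumes N: "NOM n (owa n w)" and a0: "0 < w 1" and a1: "w 1 < 1"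
  shows False
proof -
  define a where "a = w 1"
  define x :: real where "x = (1 - a) / 4"
  have i: "1 \<in> {1..n}" using n1 by simp
  have x: "x \<in> {0..1}" using a0 a1 unfolding x_def a_def by auto
  have z: "(0::real) \<in> {0..1}" by simp
  have "(INF y\<in>others n 1. util x (owa n w (y(1:=0)))) \<le> (INF y\<in>others n 1. util x (owa n w (y(1:=x))))"
    using N i x z unfolding NOM_def by blast
  moreover have "(INF y\<in>others n 1. util x (owa n w (y(1:=x)))) \<le> 1 - \<bar>x - (a * x + (1 - a))\<bar>"
    using inf_ub[OF i x x const_others[of 1 1]] special[OF i, of 1 x] x
    unfolding util_def a_def by (auto split: if_splits)
  moreover have "1 - max \<bar>x - w n * 0\<bar> \<bar>x - (a * 0 + (1 - a))\<bar> \<le> (INF y\<in>others n 1. util x (owa n w (y(1:=0))))"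
    using inf_lb[OF i x z] unfolding a_def by simp
  moreover have "\<bar>x - (a * x + (1 - a))\<bar> = (1 - a) * (1 - x)"
  proof -
    have "x - (a * x + (1 - a)) = - ((1 - a) * (1 - x))" by (simp add: algebra_simps)
    moreover have "(1 - a) * (1 - x) \<ge> 0" using x a1 unfolding a_def by simp
    ultimately show ?thesis by simp
  qed
  moreover have lt: "(1 - a) * (1 - x) > x" "(1 - a) * (1 - x) > \<bar>x - (1 - a)\<bar>"
  proof -
    have b: "0 < 1 - a" "1 - a < 1" using a0 a1 unfolding a_def by auto
    have "(1 - a) * (1 - x) = (1-a)/4 + (1-a) * (3 - (1 - a)) / 4" unfolding x_def by (simp add: field_simps)
    moreover have "(1 - a) * (3 - (1 - a)) > 0" by (rule mult_pos_pos) (use b in auto)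
    ultimately show "(1 - a) * (1 - x) > x" unfolding x_def by simp
    have "(1 - a) * (1 - x) = 3 * (1-a)/4 + (1-a) * (1 - (1 - a)) / 4" unfolding x_def by (simp add: field_simps)
    moreover have "(1 - a) * (1 - (1 - a)) > 0" by (rule mult_pos_pos) (use b in auto)
    moreover have "\<bar>x - (1 - a)\<bar> = 3 * (1-a)/4"
    proof -
      have "x - (1 - a) = - (3 * (1-a)/4)" unfolding x_def by (simp add: field_simps)
      then show ?thesis using b by simp
    qed
    ultimately show "(1 - a) * (1 - x) > \<bar>x - (1 - a)\<bar>" by linarith
  qed
  moreover have "max \<bar>x - w n * 0\<bar> \<bar>x - (a * 0 + (1 - a))\<bar> < (1 - a) * (1 - x)"
    using lt x by simp
  ultimately show False by linarith
qed

lemma nec2: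
  assumes N: "NOM n (owa n w)" and a0: "0 < w n" and a1: "w n < 1"
  shows False
proof -
  define b where "b = w n"
  define x :: real where "x = 1 - (1 - b) / 4"
  have i: "1 \<in> {1..n}" using n1 by simp
  have x: "x \<in> {0..1}" using a0 a1 unfolding x_def b_def by auto
  have xp: "x > 0" using a0 a1 unfolding x_def b_def by auto
  have z: "(1::real) \<in> {0..1}" by simp
  have "(INF y\<in>others n 1. util x (owa n w (y(1:=1)))) \<le> (INF y\<in>others n 1. util x (owa n w (y(1:=x))))"
    using N i x z unfolding NOM_def by blast
  moreover have "(INF y\<in>others n 1. util x (owa n w (y(1:=x)))) \<le> 1 - \<bar>x - b * x\<bar>"
    using inf_ub[OF i x x const_others[of 0 1]] special[OF i, of 0 x] xp
    unfolding util_def b_def by (auto split: if_splits)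
  moreover have "1 - max \<bar>x - b * 1\<bar> \<bar>x - (w 1 * 1 + (1 - w 1))\<bar> \<le> (INF y\<in>others n 1. util x (owa n w (y(1:=1))))"
    using inf_lb[OF i x z] unfolding b_def by simp
  moreover have "\<bar>x - b * x\<bar> = (1 - b) * x"
  proof -
    have "x - b * x = (1 - b) * x" by (simp add: algebra_simps)
    moreover have "(1 - b) * x \<ge> 0" using x a1 unfolding b_def by simp
    ultimately show ?thesis by simp
  qed
  moreover have lt: "(1 - b) * x > 1 - x" "(1 - b) * x > \<bar>x - b\<bar>"
  proof -
    have b: "0 < 1 - b" "1 - b < 1" using a0 a1 unfolding b_def by auto
    have "(1 - b) * x = (1-b)/4 + (1-b) * (3 - (1 - b)) / 4" unfolding x_def by (simp add: field_simps)
    moreover have "(1 - b) * (3 - (1 - b)) > 0" by (rule mult_pos_pos) (use b in auto)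
    ultimately show "(1 - b) * x > 1 - x" unfolding x_def by simp
    have "(1 - b) * x = 3 * (1-b)/4 + (1-b) * (1 - (1 - b)) / 4" unfolding x_def by (simp add: field_simps)
    moreover have "(1 - b) * (1 - (1 - b)) > 0" by (rule mult_pos_pos) (use b in auto)
    moreover have "\<bar>x - b\<bar> = 3 * (1-b)/4"
    proof -
      have "x - b = 3 * (1-b)/4" unfolding x_def by (simp add: field_simps)
      then show ?thesis using b by simp
    qed
    ultimately show "(1 - b) * x > \<bar>x - b\<bar>" by linarith
  qed
  moreover have "max \<bar>x - b * 1\<bar> \<bar>x - (w 1 * 1 + (1 - w 1))\<bar> < (1 - b) * x"
    using lt x by simp
  ultimately show False by linarith
qed

end

theorem theorem2:
  fixes n :: nat and w :: "nat \<Rightarrow> real"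
  assumes "n \<ge> 1"
    and "\<forall>j\<in>{1..n}. w j \<in> {0..1}"
    and "(\<Sum>j=1..n. w j) = 1"
  shows "NOM n (owa n w) \<longleftrightarrow> ((\<exists>j\<in>{1..n}. w j = 1) \<or> (w 1 = 0 \<and> w n = 0))"
proof -
  interpret owa_ctx n w using assms by unfold_locales
  have zero: "w k = 0" if j: "j \<in> {1..n}" "w j = 1" and k: "k \<in> {1..n}" "k \<noteq> j" for j k
  proof -
    have "(\<Sum>l\<in>{j,k}. w l) \<le> (\<Sum>l=1..n. w l)"
      by (rule sum_mono2) (use j k assms(2) in auto)
    then have "w k \<le> 0" using j k assms(3) by simp
    then show ?thesis using k assms(2) by force
  qed
  have "((\<exists>j\<in>{1..n}. w j = 1) \<or> (w 1 = 0 \<and> w n = 0)) \<longleftrightarrow>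
        ((w 1 = 0 \<or> w 1 = 1) \<and> (w n = 0 \<or> w n = 1))"
  proof
    assume "(\<exists>j\<in>{1..n}. w j = 1) \<or> (w 1 = 0 \<and> w n = 0)"
    then show "(w 1 = 0 \<or> w 1 = 1) \<and> (w n = 0 \<or> w n = 1)"
    proof
      assume "\<exists>j\<in>{1..n}. w j = 1"
      then obtain j where j: "j \<in> {1..n}" "w j = 1" by blast
      have "w 1 = 0 \<or> w 1 = 1" using zero[OF j, of 1] j assms(1) by (cases "j = 1") auto
      moreover have "w n = 0 \<or> w n = 1" using zero[OF j, of n] j assms(1) by (cases "j = n") auto
      ultimately show ?thesis by blast
    qed auto
  next
    assume "(w 1 = 0 \<or> w 1 = 1) \<and> (w n = 0 \<or> w n = 1)"
    then show "(\<exists>j\<in>{1..n}. w j = 1) \<or> (w 1 = 0 \<and> w n = 0)"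
      using assms(1) by force
  qed
  moreover have "NOM n (owa n w) \<longleftrightarrow> ((w 1 = 0 \<or> w 1 = 1) \<and> (w n = 0 \<or> w n = 1))"
  proof
    assume N: "NOM n (owa n w)"
    have "0 \<le> w 1" "w 1 \<le> 1" "0 \<le> w n" "w n \<le> 1" using assms(1,2) by auto
    then show "(w 1 = 0 \<or> w 1 = 1) \<and> (w n = 0 \<or> w n = 1)"
      using nec1[OF N] nec2[OF N] by force
  qed (rule suff)
  ultimately show ?thesis by simp
qed

end
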